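(* Let $(u_n)_{n \geq 1}$ be a virtual isometry. For $n \geq 1$ let $x_n := u_n(e_n)$, let $(f^{(n)}_k)_{1\le k\le n}$ be an orthonormal basis of $\mathbb{C}^n$ consisting of eigenvectors of $u_n$ with corresponding eigenvalues $(\lambda^{(n)}_k)_{1\le k\le n}$, let $P_n(z) := \det(z\,\mathrm{Id}_n - u_n)$, and write $x_{n+1} = \sum_{k=1}^n \mu^{(n)}_k f^{(n)}_k + \nu_n e_{n+1}$. Then for every $n \geq 1$ such that $x_{n+1} \neq e_{n+1}$, one has $\nu_n \neq 1$ and, for all $z \notin \{\lambda^{(n)}_1,\dots,\lambda^{(n)}_n\}$, $$P_{n+1}(z) = \frac{P_n(z)}{\overline{\nu_n} - 1}\left[(z - \nu_n)(\overline{\nu_n} - 1) - (z-1)\sum_{k=1}^n |\mu^{(n)}_k|^2 \frac{\lambda^{(n)}_k}{z - \lambda^{(n)}_k}\right].$$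
   Context: Let $(e_k)$ be the canonical basis of $\ell^2$; identify $\mathbb{C}^n$ with the span of $e_1,\dots,e_n$ (so $\mathbb{C}^n\subset\mathbb{C}^{n+1}$) and $U(n)$ with the unitary operators fixing every $e_k$, $k>n$. For $n\ge m\ge1$ and $u\in U(n)$, $\pi_{n,m}(u)$ is the unique $v\in U(m)$ such that the range of $u-v$ is contained in $(u-\mathrm{Id})(\mathrm{span}\{e_k:k>m\})$ (existence and uniqueness are known). A virtual isometry is a sequence $(u_n)_{n\ge1}$ with $u_n\in U(n)$ and $\pi_{n+1,n}(u_{n+1})=u_n$ for all $n\ge1$. *)

theory Defs
  imports Complex_Main "Jordan_Normal_Form.Determinant" "Jordan_Normal_Form.Conjugate"
begin

text \<open>Conventions: a finite-rank operator on l2 fixing e_k for k > N is represented by its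
  N x N block (a complex matrix, 0-based indices, so paper's e_k is unit_vec N (k-1)).\<close>

definition adjoint_mat :: "complex mat \<Rightarrow> complex mat" where
  "adjoint_mat A = mat (dim_col A) (dim_row A) (\<lambda>(i,j). cnj (A $$ (j,i)))"

definition unitary_mat :: "nat \<Rightarrow> complex mat \<Rightarrow> bool" where
  "unitary_mat n U \<longleftrightarrow> U \<in> carrier_mat n n \<and> U * adjoint_mat U = 1\<^sub>m n \<and> adjoint_mat U * U = 1\<^sub>m n"

definition emb_mat :: "nat \<Rightarrow> complex mat \<Rightarrow> complex mat" where
  "emb_mat N A = mat N N (\<lambda>(i,j). if i < dim_row A \<and> j < dim_row A then A $$ (i,j)
                                     else (if i = j then 1 else 0))"

definition emb_vec :: "nat \<Rightarrow> complex vec \<Rightarrow> complex vec" where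
  "emb_vec N v = vec N (\<lambda>i. if i < dim_vec v then v $ i else 0)"

text \<open>v in U(m) is such that range(u - v) is contained in (u - Id)(span{e_k : k > m}),
  for u in U(n). All operators involved fix e_k for k > n, so everything happens in C^n.\<close>
definition is_proj :: "nat \<Rightarrow> nat \<Rightarrow> complex mat \<Rightarrow> complex mat \<Rightarrow> bool" where
  "is_proj n m u v \<longleftrightarrow> unitary_mat m v \<and>
     (\<forall>x \<in> carrier_vec n. \<exists>y \<in> carrier_vec n. (\<forall>i<m. y $ i = 0) \<and>
         (u - emb_mat n v) *\<^sub>v x = (u - 1\<^sub>m n) *\<^sub>v y)"

definition proj :: "nat \<Rightarrow> nat \<Rightarrow> complex mat \<Rightarrow> complex mat" where
  "proj n m u = (THE v. is_proj n m u v)"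

definition virtual_isometry :: "(nat \<Rightarrow> complex mat) \<Rightarrow> bool" where
  "virtual_isometry u \<longleftrightarrow> (\<forall>n\<ge>1. unitary_mat n (u n)) \<and>
     (\<forall>n\<ge>1. proj (n+1) n (u (n+1)) = u n)"

end

theory Submission
  imports Defs
begin

lemma cscalar_eq: "b \<in> carrier_vec N \<Longrightarrow> a \<bullet>c b = (\<Sum>i<N. a$i * cnj (b$i))"
  unfolding scalar_prod_def by (auto simp: atLeast0LessThan intro!: sum.cong)

lemma mult_mat_vec_eq: "A \<in> carrier_mat M N \<Longrightarrow> v \<in> carrier_vec N \<Longrightarrow> i < M \<Longrightarrow>
   (A *\<^sub>v v) $ i = (\<Sum>j<N. A $$ (i,j) * v $ j)"
  by (auto simp: scalar_prod_def atLeast0LessThan intro!: sum.cong)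

lemma mat_mult_eq: "A \<in> carrier_mat M K \<Longrightarrow> B \<in> carrier_mat K N \<Longrightarrow> i < M \<Longrightarrow> j < N \<Longrightarrow>
   (A * B) $$ (i,j) = (\<Sum>k<K. A $$ (i,k) * B $$ (k,j))"
  by (auto simp: scalar_prod_def atLeast0LessThan intro!: sum.cong)

lemma ip_add_l:
  assumes a: "(a::complex vec) \<in> carrier_vec N" and b: "(b::complex vec) \<in> carrier_vec N" and c: "(c::complex vec) \<in> carrier_vec N"
  shows "(a + b) \<bullet>c c = a \<bullet>c c + b \<bullet>c c"
proof -
  have "(a + b) \<bullet>c c = (\<Sum>i<N. a$i * cnj (c$i) + b$i * cnj (c$i))"
    unfolding cscalar_eq[OF c] by (rule sum.cong) (use a b in \<open>auto simp: ring_distribs\<close>)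
  thus ?thesis unfolding cscalar_eq[OF c] sum.distrib .
qed

lemma ip_minus_l:
  assumes a: "(a::complex vec) \<in> carrier_vec N" and b: "(b::complex vec) \<in> carrier_vec N" and c: "(c::complex vec) \<in> carrier_vec N"
  shows "(a - b) \<bullet>c c = a \<bullet>c c - b \<bullet>c c"
proof -
  have "(a - b) \<bullet>c c = (\<Sum>i<N. a$i * cnj (c$i) - b$i * cnj (c$i))"
    unfolding cscalar_eq[OF c] by (rule sum.cong) (use a b in \<open>auto simp: ring_distribs\<close>)
  thus ?thesis unfolding cscalar_eq[OF c] sum_subtractf .
qed

lemma ip_smult_l:
  assumes a: "(a::complex vec) \<in> carrier_vec N" and c: "(c::complex vec) \<in> carrier_vec N"
  shows "(k \<cdot>\<^sub>v a) \<bullet>c c = k * (a \<bullet>c c)"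
proof -
  have "(k \<cdot>\<^sub>v a) \<bullet>c c = (\<Sum>i<N. k * (a$i * cnj (c$i)))"
    unfolding cscalar_eq[OF c] by (rule sum.cong) (use a in \<open>auto\<close>)
  thus ?thesis unfolding cscalar_eq[OF c] sum_distrib_left .
qed

lemma ip_conj:
  assumes a: "(a::complex vec) \<in> carrier_vec N" and c: "(c::complex vec) \<in> carrier_vec N"
  shows "c \<bullet>c a = cnj (a \<bullet>c c)"
  unfolding cscalar_eq[OF a] cscalar_eq[OF c] cnj_sum by (simp add: mult.commute)

lemma ip_add_r:
  assumes a: "(a::complex vec) \<in> carrier_vec N" and b: "(b::complex vec) \<in> carrier_vec N" and c: "(c::complex vec) \<in> carrier_vec N"
  shows "c \<bullet>c (a + b) = c \<bullet>c a + c \<bullet>c b"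
proof -
  have "c \<bullet>c (a + b) = cnj ((a + b) \<bullet>c c)" by (rule ip_conj) (use a b c in auto)
  also have "\<dots> = cnj (a \<bullet>c c) + cnj (b \<bullet>c c)" using ip_add_l[OF a b c] by simp
  also have "\<dots> = c \<bullet>c a + c \<bullet>c b" using ip_conj[OF a c] ip_conj[OF b c] by simp
  finally show ?thesis .
qed

lemma ip_minus_r:
  assumes a: "(a::complex vec) \<in> carrier_vec N" and b: "(b::complex vec) \<in> carrier_vec N" and c: "(c::complex vec) \<in> carrier_vec N"
  shows "c \<bullet>c (a - b) = c \<bullet>c a - c \<bullet>c b"
proof -
  have "c \<bullet>c (a - b) = cnj ((a - b) \<bullet>c c)" by (rule ip_conj) (use a b c in auto)
  also have "\<dots> = cnj (a \<bullet>c c) - cnj (b \<bullet>c c)" using ip_minus_l[OF a b c] by simp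
  also have "\<dots> = c \<bullet>c a - c \<bullet>c b" using ip_conj[OF a c] ip_conj[OF b c] by simp
  finally show ?thesis .
qed

lemma ip_smult_r:
  assumes a: "(a::complex vec) \<in> carrier_vec N" and c: "(c::complex vec) \<in> carrier_vec N"
  shows "c \<bullet>c (k \<cdot>\<^sub>v a) = cnj k * (c \<bullet>c a)"
proof -
  have "c \<bullet>c (k \<cdot>\<^sub>v a) = cnj ((k \<cdot>\<^sub>v a) \<bullet>c c)" by (rule ip_conj) (use a c in auto)
  also have "\<dots> = cnj k * cnj (a \<bullet>c c)" using ip_smult_l[OF a c, of k] by simp
  also have "\<dots> = cnj k * (c \<bullet>c a)" using ip_conj[OF a c] by simp
  finally show ?thesis .
qed

lemma ip_unit_r:
  assumes a: "(a::complex vec) \<in> carrier_vec N" and k: "k < N"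
  shows "a \<bullet>c unit_vec N k = a $ k"
proof -
  have "a \<bullet>c unit_vec N k = (\<Sum>i<N. a$i * cnj (unit_vec N k $ i))"
    by (rule cscalar_eq) simp
  also have "\<dots> = (\<Sum>i<N. if i = k then a $ k else 0)"
    by (rule sum.cong) (use k in auto)
  finally have "a \<bullet>c unit_vec N k = (\<Sum>i<N. if i = k then a $ k else 0)" .
  thus ?thesis using k by simp
qed

lemma ip_unit_l:
  assumes a: "(a::complex vec) \<in> carrier_vec N" and k: "k < N"
  shows "unit_vec N k \<bullet>c a = cnj (a $ k)"
  using ip_conj[OF a, of "unit_vec N k"] ip_unit_r[OF a k] by simp

lemma ip_unit_unit: assumes "j < N" "k < N"
  shows "unit_vec N j \<bullet>c (unit_vec N k :: complex vec) = (if j = k then 1 else 0)"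
proof -
  have "unit_vec N j \<bullet>c (unit_vec N k :: complex vec) = unit_vec N j $ k"
    by (rule ip_unit_r) (use assms in auto)
  thus ?thesis using assms by auto
qed

lemma mat_unit:
  assumes A: "(A::complex mat) \<in> carrier_mat M N" and i: "i < M" and j: "j < N"
  shows "(A *\<^sub>v unit_vec N j) $ i = A $$ (i,j)"
proof -
  have "(A *\<^sub>v unit_vec N j) $ i = (\<Sum>k<N. A $$ (i,k) * unit_vec N j $ k)"
    by (rule mult_mat_vec_eq[OF A _ i]) simp
  also have "\<dots> = (\<Sum>k<N. if k = j then A $$ (i,j) else 0)"
    by (rule sum.cong) (use j in auto)
  finally have "(A *\<^sub>v unit_vec N j) $ i = (\<Sum>k<N. if k = j then A $$ (i,j) else 0)" .
  thus ?thesis using j by simp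
qed

lemma adj_ip:
  assumes A: "A \<in> carrier_mat N N" and a: "a \<in> carrier_vec N" and b: "(b::complex vec) \<in> carrier_vec N"
  shows "(A *\<^sub>v a) \<bullet>c b = a \<bullet>c (adjoint_mat A *\<^sub>v b)"
proof -
  have AA: "adjoint_mat A \<in> carrier_mat N N" using A by (auto simp: adjoint_mat_def)
  have "(A *\<^sub>v a) \<bullet>c b = (\<Sum>i<N. (\<Sum>j<N. A $$ (i,j) * a $ j) * cnj (b$i))"
    by (subst cscalar_eq[OF b], rule sum.cong, simp, subst mult_mat_vec_eq[OF A a], auto)
  also have "\<dots> = (\<Sum>i<N. \<Sum>j<N. a $ j * (A $$ (i,j) * cnj (b$i)))"
    by (rule sum.cong[OF refl]) (simp add: sum_distrib_left sum_distrib_right mult_ac)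
  also have "\<dots> = (\<Sum>j<N. \<Sum>i<N. a $ j * (A $$ (i,j) * cnj (b$i)))"
    by (rule sum.swap)
  also have "\<dots> = (\<Sum>j<N. a $ j * cnj (\<Sum>i<N. adjoint_mat A $$ (j,i) * b $ i))"
  proof (rule sum.cong[OF refl])
    fix j assume "j \<in> {..<N}"
    hence j: "j < N" by simp
    have "(\<Sum>i<N. adjoint_mat A $$ (j,i) * b $ i) = (\<Sum>i<N. cnj (A $$ (i,j)) * b $ i)"
      by (rule sum.cong) (use A j in \<open>auto simp: adjoint_mat_def\<close>)
    thus "(\<Sum>i<N. a $ j * (A $$ (i,j) * cnj (b$i))) = a $ j * cnj (\<Sum>i<N. adjoint_mat A $$ (j,i) * b $ i)"
      by (simp add: cnj_sum sum_distrib_left mult_ac)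
  qed
  also have "\<dots> = a \<bullet>c (adjoint_mat A *\<^sub>v b)"
    by (subst cscalar_eq[of _ N], use AA b in simp, rule sum.cong, simp, subst mult_mat_vec_eq[OF AA b], auto)
  finally show ?thesis .
qed

lemma unitary_ip:
  assumes U: "unitary_mat N U" and a: "a \<in> carrier_vec N" and b: "(b::complex vec) \<in> carrier_vec N"
  shows "(U *\<^sub>v a) \<bullet>c (U *\<^sub>v b) = a \<bullet>c b"
proof -
  have UC: "U \<in> carrier_mat N N" and UU: "adjoint_mat U * U = 1\<^sub>m N"
    using U by (auto simp: unitary_mat_def)
  have AA: "adjoint_mat U \<in> carrier_mat N N" using UC by (auto simp: adjoint_mat_def)
  have "(U *\<^sub>v a) \<bullet>c (U *\<^sub>v b) = a \<bullet>c (adjoint_mat U *\<^sub>v (U *\<^sub>v b))"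
    using adj_ip[OF UC a] UC b by simp
  also have "adjoint_mat U *\<^sub>v (U *\<^sub>v b) = b"
    using assoc_mult_mat_vec[OF AA UC b] UU b by simp
  finally show ?thesis .
qed

lemma nu_ne1:
  assumes U: "unitary_mat (n+1) U" and ne: "U *\<^sub>v unit_vec (n+1) n \<noteq> unit_vec (n+1) n"
  shows "(U *\<^sub>v unit_vec (n+1) n) $ n \<noteq> 1"
proof
  let ?e = "unit_vec (n+1) n :: complex vec" let ?x = "U *\<^sub>v ?e"
  assume x1: "?x $ n = 1"
  have UC: "U \<in> carrier_mat (n+1) (n+1)" using U by (auto simp: unitary_mat_def)
  have xc: "?x \<in> carrier_vec (n+1)" using UC by auto
  have "?x \<bullet>c ?x = ?e \<bullet>c ?e" by (rule unitary_ip[OF U]) auto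
  also have "?e \<bullet>c ?e = 1" using ip_unit_unit[of n "n+1" n] by simp
  finally have "(\<Sum>i<n+1. ?x $ i * cnj (?x $ i)) = 1" using cscalar_eq[OF xc] by simp
  hence "(\<Sum>i<n. ?x $ i * cnj (?x $ i)) + 1 = 1" using x1 by simp
  hence s0: "(\<Sum>i<n. ?x $ i * cnj (?x $ i)) = 0" by simp
  have "(\<Sum>i<n. ?x $ i * cnj (?x $ i)) = complex_of_real (\<Sum>i<n. (cmod (?x $ i))^2)"
    unfolding of_real_sum by (rule sum.cong[OF refl], rule complex_norm_square[symmetric])
  with s0 have "complex_of_real (\<Sum>i<n. (cmod (?x $ i))^2) = 0" by simp
  hence "(\<Sum>i<n. (cmod (?x $ i))^2) = 0" by (simp only: of_real_eq_0_iff)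
  hence z: "\<forall>i<n. ?x $ i = 0" by (simp add: sum_nonneg_eq_0_iff)
  have "?x = ?e"
  proof (rule eq_vecI)
    show "dim_vec ?x = dim_vec ?e" using UC by simp
    fix i assume "i < dim_vec ?e"
    hence "i < n \<or> i = n" by auto
    thus "?x $ i = ?e $ i" using z x1 by auto
  qed
  with ne show False by simp
qed

lemma emb_row_n:
  assumes v: "v \<in> carrier_mat n n" and a: "(a::complex vec) \<in> carrier_vec (n+1)"
  shows "(emb_mat (n+1) v *\<^sub>v a) $ n = a $ n"
proof -
  have E: "emb_mat (n+1) v \<in> carrier_mat (n+1) (n+1)" by (simp add: emb_mat_def)
  have "(emb_mat (n+1) v *\<^sub>v a) $ n = (\<Sum>j<n+1. emb_mat (n+1) v $$ (n,j) * a $ j)"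
    by (rule mult_mat_vec_eq[OF E a]) simp
  also have "\<dots> = (\<Sum>j<n+1. if j = n then a $ n else 0)"
    by (rule sum.cong) (use v in \<open>auto simp: emb_mat_def\<close>)
  finally show ?thesis by simp
qed

lemma proj_apply:
  assumes UC: "U \<in> carrier_mat (n+1) (n+1)" and nu: "(U *\<^sub>v unit_vec (n+1) n) $ n \<noteq> 1"
    and p: "is_proj (n+1) n U v" and a: "a \<in> carrier_vec (n+1)"
  shows "emb_mat (n+1) v *\<^sub>v a = U *\<^sub>v a - (((U *\<^sub>v a) $ n - a $ n) / ((U *\<^sub>v unit_vec (n+1) n) $ n - 1))
           \<cdot>\<^sub>v (U *\<^sub>v unit_vec (n+1) n - unit_vec (n+1) n)"
proof -
  let ?e = "unit_vec (n+1) n :: complex vec"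
  let ?x = "U *\<^sub>v ?e"
  let ?E = "emb_mat (n+1) v"
  have vC: "v \<in> carrier_mat n n" using p by (simp add: is_proj_def unitary_mat_def)
  have EC: "?E \<in> carrier_mat (n+1) (n+1)" by (simp add: emb_mat_def)
  obtain y where yC: "y \<in> carrier_vec (n+1)" and y0: "\<forall>i<n. y $ i = 0"
     and yeq: "(U - ?E) *\<^sub>v a = (U - 1\<^sub>m (n+1)) *\<^sub>v y"
    using p a unfolding is_proj_def by blast
  have c1: "((U - 1\<^sub>m (n+1)) *\<^sub>v y) $ i = y$n * (?x $ i - ?e $ i)" if i: "i < n+1" for i
  proof -
    have "((U - 1\<^sub>m (n+1)) *\<^sub>v y) $ i = (\<Sum>j<n+1. (U - 1\<^sub>m (n+1)) $$ (i,j) * y $ j)"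
      by (rule mult_mat_vec_eq[OF _ yC i]) (use UC in auto)
    also have "\<dots> = (\<Sum>j<n+1. if j = n then (U $$ (i,n) - ?e $ i) * y $ n else 0)"
      by (rule sum.cong) (use UC i y0 in \<open>auto simp: less_Suc_eq\<close>)
    also have "\<dots> = (U $$ (i,n) - ?e $ i) * y $ n" by simp
    finally show ?thesis using mat_unit[OF UC i, of n] by simp
  qed
  have key: "(U *\<^sub>v a) $ i - (?E *\<^sub>v a) $ i = y $ n * (?x $ i - ?e $ i)" if i: "i < n+1" for i
  proof -
    have "(U *\<^sub>v a) $ i - (?E *\<^sub>v a) $ i = ((U - ?E) *\<^sub>v a) $ i"
      using minus_mult_distrib_mat_vec[OF UC EC a] i UC by (simp add: emb_mat_def)
    also have "\<dots> = ((U - 1\<^sub>m (n+1)) *\<^sub>v y) $ i" by (simp only: yeq)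
    also have "\<dots> = y$n * (?x $ i - ?e $ i)" by (rule c1[OF i])
    finally show ?thesis .
  qed
  from key[of n] emb_row_n[OF vC a] have "(U *\<^sub>v a) $ n - a $ n = y $ n * (?x $ n - 1)" by simp
  hence yn: "y $ n = ((U *\<^sub>v a) $ n - a $ n) / (?x $ n - 1)" using nu by (simp add: field_simps)
  show ?thesis
  proof (rule eq_vecI)
    fix i assume "i < dim_vec (U *\<^sub>v a - (((U *\<^sub>v a) $ n - a $ n) / (?x $ n - 1)) \<cdot>\<^sub>v (?x - ?e))"
    hence i: "i < n+1" using UC by simp
    from key[OF i] have "(?E *\<^sub>v a) $ i = (U *\<^sub>v a) $ i - y $ n * (?x $ i - ?e $ i)"
    proof -
      have "(?E *\<^sub>v a) $ i = (U *\<^sub>v a) $ i - ((U *\<^sub>v a) $ i - (?E *\<^sub>v a) $ i)" by (simp add: algebra_simps)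
      thus ?thesis by (simp only: key[OF i])
    qed
    thus "(?E *\<^sub>v a) $ i = (U *\<^sub>v a - (((U *\<^sub>v a) $ n - a $ n) / (?x $ n - 1)) \<cdot>\<^sub>v (?x - ?e)) $ i"
      using i UC yn by simp
  next
    show "dim_vec (?E *\<^sub>v a) = dim_vec (U *\<^sub>v a - (((U *\<^sub>v a) $ n - a $ n) / (?x $ n - 1)) \<cdot>\<^sub>v (?x - ?e))"
      using UC by (simp add: emb_mat_def)
  qed
qed

lemma proj_unique:
  assumes UC: "U \<in> carrier_mat (n+1) (n+1)" and nu: "(U *\<^sub>v unit_vec (n+1) n) $ n \<noteq> 1"
    and p1: "is_proj (n+1) n U v1" and p2: "is_proj (n+1) n U v2"
  shows "v1 = v2"
proof -
  have v1C: "v1 \<in> carrier_mat n n" using p1 by (simp add: is_proj_def unitary_mat_def)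
  have v2C: "v2 \<in> carrier_mat n n" using p2 by (simp add: is_proj_def unitary_mat_def)
  have E1: "emb_mat (n+1) v1 \<in> carrier_mat (n+1) (n+1)" by (simp add: emb_mat_def)
  have E2: "emb_mat (n+1) v2 \<in> carrier_mat (n+1) (n+1)" by (simp add: emb_mat_def)
  show ?thesis
  proof (rule eq_matI)
    fix i j assume "i < dim_row v2" "j < dim_col v2"
    hence i: "i < n" and j: "j < n" using v2C by auto
    have eq: "emb_mat (n+1) v1 *\<^sub>v unit_vec (n+1) j = emb_mat (n+1) v2 *\<^sub>v unit_vec (n+1) j"
      by (simp only: proj_apply[OF UC nu p1 unit_vec_carrier] proj_apply[OF UC nu p2 unit_vec_carrier])
    have "v1 $$ (i,j) = emb_mat (n+1) v1 $$ (i,j)" using i j v1C by (simp add: emb_mat_def)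
    also have "\<dots> = (emb_mat (n+1) v1 *\<^sub>v unit_vec (n+1) j) $ i"
      by (rule mat_unit[OF E1, symmetric]) (use i j in auto)
    also have "\<dots> = (emb_mat (n+1) v2 *\<^sub>v unit_vec (n+1) j) $ i" by (simp only: eq)
    also have "\<dots> = emb_mat (n+1) v2 $$ (i,j)" by (rule mat_unit[OF E2]) (use i j in auto)
    also have "\<dots> = v2 $$ (i,j)" using i j v2C by (simp add: emb_mat_def)
    finally show "v1 $$ (i,j) = v2 $$ (i,j)" .
  qed (use v1C v2C in auto)
qed

lemma proj_exists:
  assumes U: "unitary_mat (n+1) U" and nu: "(U *\<^sub>v unit_vec (n+1) n) $ n \<noteq> 1"
  shows "\<exists>v. is_proj (n+1) n U v"
proof -
  define N where "N = n+1"
  define e :: "complex vec" where "e = unit_vec N n"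
  define x where "x = U *\<^sub>v e"
  define w where "w = x - e"
  define \<nu> where "\<nu> = x $ n"
  define c where "c j = U *\<^sub>v unit_vec N j" for j
  define g where "g j = (c j \<bullet>c w) / (\<nu> - 1)" for j
  define V where "V = mat N N (\<lambda>(i,j). U $$ (i,j) + w $ i * g j)"
  define v where "v = mat n n (\<lambda>(i,j). V $$ (i,j))"
  have UN: "unitary_mat N U" using U by (simp add: N_def)
  have UC: "U \<in> carrier_mat N N" using U by (simp add: unitary_mat_def N_def)
  have nu1: "\<nu> \<noteq> 1" using nu by (simp add: \<nu>_def x_def e_def N_def)
  have eC: "e \<in> carrier_vec N" by (simp add: e_def)
  have xC: "x \<in> carrier_vec N" using UC eC by (simp add: x_def)
  have wC: "w \<in> carrier_vec N" using xC eC by (simp add: w_def)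
  have cC: "c j \<in> carrier_vec N" for j using UC by (simp add: c_def)
  have nN: "n < N" by (simp add: N_def)
  have cx: "c n = x" by (simp add: c_def x_def e_def)
  have Uc: "U $$ (i,j) = c j $ i" if "i < N" "j < N" for i j
    using mat_unit[OF UC that] by (simp add: c_def)
  have cc: "c j \<bullet>c c k = (if j = k then 1 else 0)" if jk: "j < N" "k < N" for j k
  proof -
    have "c j \<bullet>c c k = unit_vec N j \<bullet>c unit_vec N k" unfolding c_def
      by (rule unitary_ip[OF UN]) auto
    thus ?thesis using ip_unit_unit[OF jk] by simp
  qed
  have ce: "c j \<bullet>c e = c j $ n" for j unfolding e_def by (rule ip_unit_r[OF cC nN])
  have xx: "x \<bullet>c x = 1" using cc[OF nN nN] cx by simp
  have xe: "x \<bullet>c e = \<nu>" using ce[of n] cx by (simp add: \<nu>_def)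
  have ex: "e \<bullet>c x = cnj \<nu>" using ip_conj[OF xC eC] xe by simp
  have ee: "e \<bullet>c e = 1" unfolding e_def using ip_unit_unit[OF nN nN] by simp
  have cw: "c j \<bullet>c w = (if j = n then 1 else 0) - U $$ (n,j)" if j: "j < N" for j
    unfolding w_def using ip_minus_r[OF xC eC cC] cc[OF j nN] cx ce Uc[OF nN j] by simp
  have h1: "w \<bullet>c w = x \<bullet>c w - e \<bullet>c w" unfolding w_def by (rule ip_minus_l[OF xC eC]) (use xC eC in simp)
  have h2: "x \<bullet>c w = x \<bullet>c x - x \<bullet>c e" unfolding w_def by (rule ip_minus_r[OF xC eC xC])
  have h3: "e \<bullet>c w = e \<bullet>c x - e \<bullet>c e" unfolding w_def by (rule ip_minus_r[OF xC eC eC])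
  have ww: "w \<bullet>c w = 2 - \<nu> - cnj \<nu>" using h1 h2 h3 xx xe ex ee by simp
  have VC: "V \<in> carrier_mat N N" by (simp add: V_def)
  have colV: "col V j = c j + g j \<cdot>\<^sub>v w" if j: "j < N" for j
    by (rule eq_vecI) (use j cC wC Uc in \<open>auto simp: V_def mult.commute\<close>)
  have gcw: "c j \<bullet>c w = (\<nu> - 1) * g j" for j using nu1 by (simp add: g_def)
  have VV: "col V j \<bullet>c col V k = (if j = k then 1 else 0)" if j: "j < N" and k: "k < N" for j k
  proof -
    have wc: "w \<bullet>c c k = (cnj \<nu> - 1) * cnj (g k)" using ip_conj[OF cC wC, of k] gcw[of k] by simp
    have "col V j \<bullet>c col V k = (c j + g j \<cdot>\<^sub>v w) \<bullet>c (c k + g k \<cdot>\<^sub>v w)" using colV j k by simp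
    also have "\<dots> = c j \<bullet>c c k + cnj (g k) * (c j \<bullet>c w) + g j * (w \<bullet>c c k) + g j * cnj (g k) * (w \<bullet>c w)"
      using cC wC by (simp add: ip_add_l[of _ N] ip_add_r[of _ N] ip_smult_l[of _ N] ip_smult_r[of _ N] algebra_simps)
    also have "\<dots> = (if j = k then 1 else 0) + cnj (g k) * ((\<nu> - 1) * g j) + g j * ((cnj \<nu> - 1) * cnj (g k)) + g j * cnj (g k) * (2 - \<nu> - cnj \<nu>)"
      by (simp only: cc[OF j k] gcw[of j] wc ww)
    also have "\<dots> = (if j = k then 1 else 0)"
      by (simp add: algebra_simps)
    finally show ?thesis .
  qed
  have gn: "g n = -1" using cw[OF nN] Uc[OF nN nN] cx nu1 by (simp add: g_def \<nu>_def field_simps)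
  have wn: "w $ n = \<nu> - 1" using xC eC nN by (simp add: w_def \<nu>_def e_def)
  have Vrow: "V $$ (n,j) = (if j = n then 1 else 0)" if j: "j < N" for j
    using j nN cw[OF j] wn nu1 by (simp add: V_def g_def)
  have Vcol: "V $$ (i,n) = (if i = n then 1 else 0)" if i: "i < N" for i
    using i nN gn Uc[OF i nN] cx xC eC by (simp add: V_def w_def e_def)
  have vC: "v \<in> carrier_mat n n" by (simp add: v_def)
  have embV: "emb_mat N v = V"
  proof (rule eq_matI)
    fix i j assume "i < dim_row V" "j < dim_col V"
    hence i: "i < N" and j: "j < N" using VC by auto
    show "emb_mat N v $$ (i,j) = V $$ (i,j)"
    proof (cases "i < n \<and> j < n")
      case True thus ?thesis using i j by (simp add: emb_mat_def v_def)
    next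
      case False
      hence "i = n \<or> j = n" using i j by (auto simp: N_def)
      thus ?thesis using False i j Vrow[OF j] Vcol[OF i] by (auto simp: emb_mat_def v_def)
    qed
  qed (use VC in \<open>auto simp: emb_mat_def\<close>)
  have adjv: "adjoint_mat v * v = 1\<^sub>m n"
  proof (rule eq_matI)
    fix i j assume "i < dim_row (1\<^sub>m n)" "j < dim_col (1\<^sub>m n)"
    hence i: "i < n" and j: "j < n" by auto
    have Vnj: "V $$ (n,j) = 0" using Vrow[of j] j by (simp add: N_def)
    have "(adjoint_mat v * v) $$ (i,j) = (\<Sum>k<n. adjoint_mat v $$ (i,k) * v $$ (k,j))"
      by (rule mat_mult_eq) (use i j in \<open>auto simp: adjoint_mat_def v_def\<close>)
    also have "\<dots> = (\<Sum>k<n. V $$ (k,j) * cnj (V $$ (k,i)))"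
      by (rule sum.cong) (use i j in \<open>auto simp: adjoint_mat_def v_def\<close>)
    also have "\<dots> = (\<Sum>k<N. V $$ (k,j) * cnj (V $$ (k,i)))"
      using Vnj by (simp add: N_def)
    also have "\<dots> = (\<Sum>k<N. col V j $ k * cnj (col V i $ k))"
      by (rule sum.cong) (use VC i j in \<open>auto simp: N_def\<close>)
    also have "\<dots> = col V j \<bullet>c col V i"
      by (rule cscalar_eq[symmetric, OF col_carrier_vec[OF _ VC]]) (use i in \<open>simp add: N_def\<close>)
    also have "\<dots> = (if j = i then 1 else 0)" by (rule VV) (use i j in \<open>auto simp: N_def\<close>)
    finally show "(adjoint_mat v * v) $$ (i,j) = 1\<^sub>m n $$ (i,j)" using i j by auto
  qed (auto simp: adjoint_mat_def v_def)
  have vadj: "v * adjoint_mat v = 1\<^sub>m n"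
    by (rule mat_mult_left_right_inverse[OF _ vC adjv]) (simp add: adjoint_mat_def v_def)
  have range: "\<forall>a \<in> carrier_vec N. \<exists>y \<in> carrier_vec N. (\<forall>i<n. y $ i = 0) \<and>
         (U - emb_mat N v) *\<^sub>v a = (U - 1\<^sub>m N) *\<^sub>v y"
  proof
    fix a :: "complex vec" assume a: "a \<in> carrier_vec N"
    define s where "s = (\<Sum>j<N. g j * a $ j)"
    have "(U - emb_mat N v) *\<^sub>v a = (U - 1\<^sub>m N) *\<^sub>v ((- s) \<cdot>\<^sub>v e)"
    proof (rule eq_vecI)
      fix i assume "i < dim_vec ((U - 1\<^sub>m N) *\<^sub>v ((- s) \<cdot>\<^sub>v e))"
      hence i: "i < N" using UC by simp
      have "((U - emb_mat N v) *\<^sub>v a) $ i = (\<Sum>j<N. (U - V) $$ (i,j) * a $ j)"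
        unfolding embV by (rule mult_mat_vec_eq[OF _ a i]) (use UC VC in auto)
      also have "\<dots> = (\<Sum>j<N. - (w $ i) * (g j * a $ j))"
        by (rule sum.cong) (use i UC in \<open>auto simp: V_def\<close>)
      also have "\<dots> = - (w $ i) * s" by (simp add: s_def sum_distrib_left)
      finally have l: "((U - emb_mat N v) *\<^sub>v a) $ i = - (w $ i) * s" .
      have "((U - 1\<^sub>m N) *\<^sub>v ((- s) \<cdot>\<^sub>v e)) $ i = (\<Sum>j<N. (U - 1\<^sub>m N) $$ (i,j) * ((- s) \<cdot>\<^sub>v e) $ j)"
        by (rule mult_mat_vec_eq[OF _ _ i]) (use UC eC in auto)
      also have "\<dots> = (\<Sum>j<N. if j = n then (U $$ (i,n) - e $ i) * (- s) else 0)"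
        by (rule sum.cong) (use i UC nN in \<open>auto simp: e_def\<close>)
      also have "\<dots> = (x $ i - e $ i) * (- s)" using nN Uc[OF i nN] cx by simp
      finally have C: "((U - 1\<^sub>m N) *\<^sub>v ((- s) \<cdot>\<^sub>v e)) $ i = (x $ i - e $ i) * (- s)" .
      have wi: "w $ i = x $ i - e $ i" using i xC eC by (simp add: w_def)
      show "((U - emb_mat N v) *\<^sub>v a) $ i = ((U - 1\<^sub>m N) *\<^sub>v ((- s) \<cdot>\<^sub>v e)) $ i"
        unfolding l C wi by (simp add: algebra_simps)
    qed (use UC in \<open>auto simp: emb_mat_def\<close>)
    thus "\<exists>y \<in> carrier_vec N. (\<forall>i<n. y $ i = 0) \<and> (U - emb_mat N v) *\<^sub>v a = (U - 1\<^sub>m N) *\<^sub>v y"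
      by (intro bexI[of _ "(- s) \<cdot>\<^sub>v e"]) (auto simp: e_def N_def)
  qed
  have "is_proj N n U v" unfolding is_proj_def unitary_mat_def using vC adjv vadj range by auto
  thus ?thesis unfolding N_def by blast
qed

lemma sum_lt_restrict:
  assumes "(n::nat) \<le> N"
  shows "(\<Sum>j<N. if j < n then f j else 0) = (\<Sum>j<n. f j)"
proof -
  have "{..<N} \<inter> {j. j < n} = {..<n}" using assms by auto
  thus ?thesis by (simp add: sum.If_cases)
qed

lemma emb_mult:
  assumes A: "A \<in> carrier_mat n n" and v: "v \<in> carrier_vec n" and nN: "n \<le> N"
  shows "emb_mat N A *\<^sub>v emb_vec N v = emb_vec N (A *\<^sub>v v)"
proof (rule eq_vecI)
  fix i assume "i < dim_vec (emb_vec N (A *\<^sub>v v))"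
  hence i: "i < N" by (simp add: emb_vec_def)
  have E: "emb_mat N A \<in> carrier_mat N N" by (simp add: emb_mat_def)
  have "(emb_mat N A *\<^sub>v emb_vec N v) $ i = (\<Sum>j<N. emb_mat N A $$ (i,j) * emb_vec N v $ j)"
    by (rule mult_mat_vec_eq[OF E _ i]) (simp add: emb_vec_def)
  also have "\<dots> = (\<Sum>j<N. if j < n then (if i < n then A $$ (i,j) * v $ j else 0) else 0)"
    by (rule sum.cong) (use A v i in \<open>auto simp: emb_mat_def emb_vec_def\<close>)
  also have "\<dots> = (\<Sum>j<n. (if i < n then A $$ (i,j) * v $ j else 0))"
    by (rule sum_lt_restrict[OF nN])
  also have "\<dots> = emb_vec N (A *\<^sub>v v) $ i"
    using i A v by (auto simp: emb_vec_def mult_mat_vec_eq[OF A v] simp del: index_mult_mat_vec)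
  finally show "(emb_mat N A *\<^sub>v emb_vec N v) $ i = emb_vec N (A *\<^sub>v v) $ i" .
qed (simp add: emb_vec_def emb_mat_def)

lemma det_sim:
  assumes A: "A \<in> carrier_mat m m" and B: "B \<in> carrier_mat m m" and G: "(G::complex mat) \<in> carrier_mat m m"
    and GG: "adjoint_mat G * G = 1\<^sub>m m" and eq: "A * G = G * B"
  shows "det A = det B"
proof -
  have AG: "adjoint_mat G \<in> carrier_mat m m" using G by (simp add: adjoint_mat_def)
  have "det (adjoint_mat G) * det G = 1" using det_mult[OF AG G] GG by simp
  hence nz: "det G \<noteq> 0" by auto
  have "det A * det G = det (A * G)" using det_mult[OF A G] by simp
  also have "\<dots> = det (G * B)" using eq by simp
  also have "\<dots> = det G * det B" using det_mult[OF G B] by simp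
  finally have "det G * det A = det G * det B" by (simp add: mult.commute)
  with nz show ?thesis by simp
qed

lemma det_rank1:
  fixes d a b :: "nat \<Rightarrow> complex"
  assumes d: "\<forall>l<n. d l \<noteq> 0" and b: "b n = 1"
  shows "det (mat (n+1) (n+1) (\<lambda>(k,l). (if k = l then d k else 0) - a k * b l)) =
    (\<Prod>i<n. d i) * (d n - a n - d n * (\<Sum>l<n. a l * b l / d l))"
proof -
  define M where "M = mat (n+1) (n+1) (\<lambda>(k,l). (if k = l then d k else 0) - a k * b l)"
  define C where "C = mat (n+1) (n+1) (\<lambda>(i,j). if i = j then 1 else if i = n \<and> j < n then - b j else (0::complex))"
  define L where "L = mat (n+1) (n+1) (\<lambda>(i,j). if i = j then 1 else if i = n \<and> j < n then b j * d n / d j else (0::complex))"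
  define MC where "MC = mat (n+1) (n+1) (\<lambda>(k,l). if l < n then (if k = l then d k else 0) - (if k = n then b l * d n else 0) else (if k = n then d n else 0) - a k)"
  define T where "T = mat (n+1) (n+1) (\<lambda>(i,j). if i < n then (if j < n then (if i = j then d i else 0) else - a i) else (if j < n then 0 else d n - a n - d n * (\<Sum>l<n. a l * b l / d l)))"
  have MC_C: "M \<in> carrier_mat (n+1) (n+1)" "C \<in> carrier_mat (n+1) (n+1)" "L \<in> carrier_mat (n+1) (n+1)"
    "MC \<in> carrier_mat (n+1) (n+1)" "T \<in> carrier_mat (n+1) (n+1)"
    by (auto simp: M_def C_def L_def MC_def T_def)
  have MCeq: "M * C = MC"
  proof (rule eq_matI)
    fix k l assume "k < dim_row MC" "l < dim_col MC"
    hence k: "k < n+1" and l: "l < n+1" by (auto simp: MC_def)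
    have "(M * C) $$ (k,l) = (\<Sum>j<n+1. M $$ (k,j) * C $$ (j,l))"
      by (rule mat_mult_eq) (use k l MC_C in auto)
    also have "\<dots> = (\<Sum>j<n. M $$ (k,j) * C $$ (j,l)) + M $$ (k,n) * C $$ (n,l)" by simp
    also have "(\<Sum>j<n. M $$ (k,j) * C $$ (j,l)) = (\<Sum>j<n. if j = l then M $$ (k,l) else 0)"
      by (rule sum.cong) (use l in \<open>auto simp: C_def\<close>)
    also have "\<dots> = (if l < n then M $$ (k,l) else 0)" by simp
    also have "(if l < n then M $$ (k,l) else 0) + M $$ (k,n) * C $$ (n,l) = MC $$ (k,l)"
    proof (cases "l < n")
      case True
      thus ?thesis using k l b by (auto simp: M_def C_def MC_def algebra_simps)
    next
      case False
      hence "l = n" using l by simp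
      thus ?thesis using k b by (auto simp: M_def C_def MC_def algebra_simps)
    qed
    finally show "(M * C) $$ (k,l) = MC $$ (k,l)" .
  qed (auto simp: M_def C_def MC_def)
  have LMC: "L * MC = T"
  proof (rule eq_matI)
    fix i l assume "i < dim_row T" "l < dim_col T"
    hence i: "i < n+1" and l: "l < n+1" by (auto simp: T_def)
    have s: "(L * MC) $$ (i,l) = (\<Sum>k<n. L $$ (i,k) * MC $$ (k,l)) + L $$ (i,n) * MC $$ (n,l)"
      by (subst mat_mult_eq) (use i l MC_C in auto)
    show "(L * MC) $$ (i,l) = T $$ (i,l)"
    proof (cases "i < n")
      case True
      have "(\<Sum>k<n. L $$ (i,k) * MC $$ (k,l)) = (\<Sum>k<n. if k = i then MC $$ (i,l) else 0)"
        by (rule sum.cong) (use True in \<open>auto simp: L_def\<close>)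
      hence "(L * MC) $$ (i,l) = MC $$ (i,l)" using s True by (simp add: L_def)
      thus ?thesis using True l by (auto simp: MC_def T_def)
    next
      case False
      hence i: "i = n" using i by simp
      have s2: "(\<Sum>k<n. L $$ (i,k) * MC $$ (k,l)) = (\<Sum>k<n. b k * d n / d k * MC $$ (k,l))"
        by (rule sum.cong) (use i in \<open>auto simp: L_def\<close>)
      show ?thesis
      proof (cases "l < n")
        case True
        have "(\<Sum>k<n. b k * d n / d k * MC $$ (k,l)) = (\<Sum>k<n. if k = l then b l * d n / d l * d l else 0)"
          by (rule sum.cong) (use True in \<open>auto simp: MC_def\<close>)
        hence "(\<Sum>k<n. b k * d n / d k * MC $$ (k,l)) = b l * d n" using True d by simp
        thus ?thesis using s s2 i True by (simp add: L_def MC_def T_def)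
      next
        case False
        hence l: "l = n" using l by simp
        have "(\<Sum>k<n. b k * d n / d k * MC $$ (k,l)) = (\<Sum>k<n. - (d n * (a k * b k / d k)))"
          by (rule sum.cong) (use l in \<open>auto simp: MC_def\<close>)
        also have "\<dots> = - (d n * (\<Sum>k<n. a k * b k / d k))" by (simp add: sum_distrib_left sum_negf)
        finally show ?thesis using s s2 i l by (simp add: L_def MC_def T_def)
      qed
    qed
  qed (auto simp: L_def T_def MC_def)
  have dL: "det L = 1"
  proof -
    have "det L = prod_list (diag_mat L)"
      by (rule det_lower_triangular[OF _ MC_C(3)]) (auto simp: L_def)
    also have "\<dots> = 1" by (simp add: prod_list_diag_prod L_def)
    finally show ?thesis .
  qed
  have dC: "det C = 1"
  proof -
    have "det C = prod_list (diag_mat C)"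
      by (rule det_lower_triangular[OF _ MC_C(2)]) (auto simp: C_def)
    also have "\<dots> = 1" by (simp add: prod_list_diag_prod C_def)
    finally show ?thesis .
  qed
  have dT: "det T = (\<Prod>i<n. d i) * (d n - a n - d n * (\<Sum>l<n. a l * b l / d l))"
  proof -
    have "det T = prod_list (diag_mat T)"
      by (rule det_upper_triangular[OF _ MC_C(5)]) (auto simp: T_def upper_triangular_def)
    also have "\<dots> = (\<Prod>i=0..<n+1. T $$ (i,i))" by (simp add: prod_list_diag_prod T_def)
    also have "\<dots> = (\<Prod>i=0..<n. T $$ (i,i)) * T $$ (n,n)" by simp
    also have "(\<Prod>i=0..<n. T $$ (i,i)) = (\<Prod>i<n. d i)"
      by (simp add: atLeast0LessThan T_def)
    finally show ?thesis by (simp add: T_def)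
  qed
  have "det (L * (M * C)) = det L * (det M * det C)"
    using det_mult[OF MC_C(3) mult_carrier_mat[OF MC_C(1) MC_C(2)]] det_mult[OF MC_C(1) MC_C(2)] by simp
  hence "det M = det T" using dL dC MCeq LMC by simp
  thus ?thesis using dT by (simp add: M_def)
qed

lemma det_diag:
  fixes d :: "nat \<Rightarrow> complex"
  shows "det (mat n n (\<lambda>(k,l). if k = l then d k else 0)) = (\<Prod>i<n. d i)"
proof -
  have "det (mat n n (\<lambda>(k,l). if k = l then d k else 0)) = prod_list (diag_mat (mat n n (\<lambda>(k,l). if k = l then d k else 0)))"
    by (rule det_upper_triangular) (auto simp: upper_triangular_def)
  also have "\<dots> = (\<Prod>i<n. d i)" by (simp add: prod_list_diag_prod atLeast0LessThan)
  finally show ?thesis .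
qed

lemma mat_eq_cols:
  assumes A: "(A::complex mat) \<in> carrier_mat m m" and G: "G \<in> carrier_mat m m" and B: "B \<in> carrier_mat m m"
    and h: "\<And>i l. i < m \<Longrightarrow> l < m \<Longrightarrow> (A *\<^sub>v col G l) $ i = (\<Sum>k<m. G $$ (i,k) * B $$ (k,l))"
  shows "A * G = G * B"
proof (rule eq_matI)
  fix i l assume "i < dim_row (G * B)" "l < dim_col (G * B)"
  hence i: "i < m" and l: "l < m" using G B by auto
  have "(A * G) $$ (i,l) = (A *\<^sub>v col G l) $ i" using A G i l by simp
  also have "\<dots> = (G * B) $$ (i,l)" using h[OF i l] mat_mult_eq[OF G B i l] by simp
  finally show "(A * G) $$ (i,l) = (G * B) $$ (i,l)" .
qed (use A G B in \<open>simp_all add: carrier_matD\<close>)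

lemma zU_apply:
  assumes U: "(U::complex mat) \<in> carrier_mat m m" and v: "v \<in> carrier_vec m" and i: "i < m"
  shows "((z \<cdot>\<^sub>m 1\<^sub>m m - U) *\<^sub>v v) $ i = z * v $ i - (U *\<^sub>v v) $ i"
proof -
  have "((z \<cdot>\<^sub>m 1\<^sub>m m - U) *\<^sub>v v) $ i = (\<Sum>j<m. (z \<cdot>\<^sub>m 1\<^sub>m m - U) $$ (i,j) * v $ j)"
    by (rule mult_mat_vec_eq[OF _ v i]) (use U in auto)
  also have "\<dots> = (\<Sum>j<m. (if j = i then z * v $ i else 0) - U $$ (i,j) * v $ j)"
    by (rule sum.cong) (use U i in \<open>auto simp: left_diff_distrib\<close>)
  also have "\<dots> = z * v $ i - (\<Sum>j<m. U $$ (i,j) * v $ j)" using i by (simp add: sum_subtractf)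
  finally show ?thesis using mult_mat_vec_eq[OF U v i] by simp
qed

lemma adj_cols:
  assumes G: "(G::complex mat) \<in> carrier_mat m m"
    and h: "\<And>i j. i < m \<Longrightarrow> j < m \<Longrightarrow> col G j \<bullet>c col G i = (if j = i then 1 else 0)"
  shows "adjoint_mat G * G = 1\<^sub>m m"
proof (rule eq_matI)
  fix i j assume "i < dim_row (1\<^sub>m m)" "j < dim_col (1\<^sub>m m)"
  hence i: "i < m" and j: "j < m" by auto
  have AG: "adjoint_mat G \<in> carrier_mat m m" using G by (simp add: adjoint_mat_def)
  have dG: "dim_row G = m" "dim_col G = m" using G by auto
  have "(adjoint_mat G * G) $$ (i,j) = (\<Sum>k<m. adjoint_mat G $$ (i,k) * G $$ (k,j))"
    by (rule mat_mult_eq[OF AG G i j])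
  also have "\<dots> = (\<Sum>k<m. col G j $ k * cnj (col G i $ k))"
    by (rule sum.cong) (use i j dG in \<open>simp_all add: adjoint_mat_def mult.commute\<close>)
  also have "\<dots> = col G j \<bullet>c col G i" by (rule cscalar_eq[symmetric, OF col_carrier_vec[OF i G]])
  also have "\<dots> = (if j = i then 1 else 0)" by (rule h[OF i j])
  finally show "(adjoint_mat G * G) $$ (i,j) = 1\<^sub>m m $$ (i,j)" using i j by auto
qed (use G in \<open>auto simp: adjoint_mat_def\<close>)



lemma lin_aux: fixes a t c :: complex assumes h: "0 = a + t * (1 - c)" shows "t * (c - 1) = a"
proof -
  have "a + t * (1 - c) = 0" using h by simp
  hence "t * (1 - c) = - a" by (simp add: add_eq_0_iff)
  hence "- (t * (1 - c)) = a" by simp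
  thus ?thesis by (simp add: algebra_simps)
qed

theorem proposition4p4:
  fixes u :: "nat \<Rightarrow> complex mat" and n :: nat
    and f :: "nat \<Rightarrow> complex vec" and lam mu :: "nat \<Rightarrow> complex" and nu :: complex
  assumes vi: "virtual_isometry u"
    and n1: "n \<ge> 1"
    and f_carrier: "\<forall>k<n. f k \<in> carrier_vec n"
    and f_orthonormal: "\<forall>k<n. \<forall>l<n. f k \<bullet>c f l = (if k = l then 1 else 0)"
    and f_eigen: "\<forall>k<n. u n *\<^sub>v f k = lam k \<cdot>\<^sub>v f k"
    and decomp: "u (n+1) *\<^sub>v unit_vec (n+1) n =
                   vec (n+1) (\<lambda>i. (\<Sum>k<n. mu k * emb_vec (n+1) (f k) $ i)
                                   + nu * unit_vec (n+1) n $ i)"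
    and x_ne: "u (n+1) *\<^sub>v unit_vec (n+1) n \<noteq> unit_vec (n+1) n"
  shows "nu \<noteq> 1 \<and>
    (\<forall>z. z \<notin> lam ` {..<n} \<longrightarrow>
       det (z \<cdot>\<^sub>m 1\<^sub>m (n+1) - u (n+1)) =
         det (z \<cdot>\<^sub>m 1\<^sub>m n - u n) / (cnj nu - 1) *
         ((z - nu) * (cnj nu - 1)
          - (z - 1) * (\<Sum>k<n. (complex_of_real (cmod (mu k)))^2 * lam k / (z - lam k))))"
proof -
  define U where "U = u (n+1)"
  define V0 where "V0 = u n"
  define e :: "complex vec" where "e = unit_vec (n+1) n"
  define x where "x = U *\<^sub>v e"
  define w where "w = x - e"
  define ft where "ft k = emb_vec (n+1) (f k)" for k
  have U: "unitary_mat (n+1) U" using vi by (simp add: virtual_isometry_def U_def)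
  have V0U: "unitary_mat n V0" using vi n1 by (simp add: virtual_isometry_def V0_def)
  have pr: "proj (n+1) n U = V0" using vi n1 by (simp add: virtual_isometry_def V0_def U_def)
  have UC: "U \<in> carrier_mat (n+1) (n+1)" using U by (simp add: unitary_mat_def)
  have V0C: "V0 \<in> carrier_mat n n" using V0U by (simp add: unitary_mat_def)
  have eC: "e \<in> carrier_vec (n+1)" by (simp add: e_def)
  have xC: "x \<in> carrier_vec (n+1)" using UC eC by (simp add: x_def)
  have wC: "w \<in> carrier_vec (n+1)" using xC eC by (simp add: w_def)
  have de: "dim_vec e = n+1" and dx: "dim_vec x = n+1" and dw: "dim_vec w = n+1"
    using eC xC wC by (auto dest: carrier_vecD)
  have fC: "f k \<in> carrier_vec n" if "k < n" for k using f_carrier that by simp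
  have ftC: "ft k \<in> carrier_vec (n+1)" for k by (simp add: ft_def emb_vec_def)
  have dft: "dim_vec (ft k) = n+1" for k by (simp add: ft_def emb_vec_def)
  have df: "dim_vec (f k) = n" if "k < n" for k using fC[OF that] by (auto dest: carrier_vecD)
  have fti: "ft k $ i = (if i < n then f k $ i else 0)" if "k < n" "i < n+1" for k i
    using fC[OF that(1)] that(2) by (simp add: ft_def emb_vec_def)
  have ftn: "ft k $ n = 0" if "k < n" for k using fti[OF that, of n] by simp
  have xne: "x \<noteq> e" using x_ne by (simp add: x_def e_def U_def)
  have xdec: "x $ i = (\<Sum>k<n. mu k * ft k $ i) + nu * e $ i" if i: "i < n+1" for i
    using arg_cong[OF decomp, of "\<lambda>v. v $ i"] i by (simp add: x_def U_def e_def ft_def)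
  have xn: "x $ n = nu"
  proof -
    have "(\<Sum>k<n. mu k * ft k $ n) = 0" by (rule sum.neutral) (use ftn in auto)
    thus ?thesis using xdec[of n] by (simp add: e_def)
  qed
  have "x $ n \<noteq> 1" using nu_ne1[OF U] xne unfolding x_def e_def by blast
  hence nu_ne: "nu \<noteq> 1" using xn by simp
  have cnu: "cnj nu - 1 \<noteq> 0"
  proof
    assume "cnj nu - 1 = 0"
    hence "cnj nu = 1" by simp
    hence "nu = 1" by (metis complex_cnj_cnj complex_cnj_one)
    with nu_ne show False by simp
  qed
  have nu': "(U *\<^sub>v unit_vec (n+1) n) $ n \<noteq> 1" using nu_ne xn by (simp add: x_def e_def)
  have ex1: "\<exists>!v. is_proj (n+1) n U v"
    using proj_exists[OF U nu'] proj_unique[OF UC nu'] by blast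
  have pj: "is_proj (n+1) n U V0"
    by (metis pr[unfolded proj_def] theI'[OF ex1])
  define T where "T l = ((U *\<^sub>v ft l) $ n - ft l $ n) / ((U *\<^sub>v unit_vec (n+1) n) $ n - 1)" for l
  have Uft: "(U *\<^sub>v ft l) $ i = lam l * ft l $ i + T l * w $ i" if l: "l < n" and i: "i < n+1" for l i
  proof -
    have h1: "emb_mat (n+1) V0 *\<^sub>v ft l = U *\<^sub>v ft l - T l \<cdot>\<^sub>v w"
      unfolding T_def w_def x_def e_def by (rule proj_apply[OF UC nu' pj ftC])
    have h2: "emb_mat (n+1) V0 *\<^sub>v ft l = emb_vec (n+1) (V0 *\<^sub>v f l)"
      unfolding ft_def by (rule emb_mult[OF V0C fC[OF l]]) simp
    have h3: "V0 *\<^sub>v f l = lam l \<cdot>\<^sub>v f l" using f_eigen l by (simp add: V0_def)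
    have "U *\<^sub>v ft l - T l \<cdot>\<^sub>v w = emb_vec (n+1) (lam l \<cdot>\<^sub>v f l)" using h1 h2 h3 by metis
    hence "(U *\<^sub>v ft l - T l \<cdot>\<^sub>v w) $ i = emb_vec (n+1) (lam l \<cdot>\<^sub>v f l) $ i"
      by (rule arg_cong[where f="\<lambda>v. v $ i"])
    hence "(U *\<^sub>v ft l) $ i - T l * w $ i = lam l * ft l $ i"
      using i UC dw df[OF l] by (simp add: ft_def emb_vec_def)
    thus ?thesis by (simp add: algebra_simps)
  qed
  have xx: "x \<bullet>c x = 1" using unitary_ip[OF U eC eC] ip_unit_unit[of n "n+1" n] by (simp add: x_def e_def)
  have ex: "e \<bullet>c x = cnj nu" using ip_unit_l[OF xC, of n] xn by (simp add: e_def)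
  have ee: "e \<bullet>c e = 1" using ip_unit_unit[of n "n+1" n] by (simp add: e_def)
  have wx: "w \<bullet>c x = 1 - cnj nu" using ip_minus_l[OF xC eC xC] xx ex by (simp add: w_def)
  have ef: "e \<bullet>c ft k = 0" if "k < n" for k using ip_unit_l[OF ftC[of k], of n] ftn[OF that] by (simp add: e_def)
  have fe: "ft k \<bullet>c e = 0" if "k < n" for k using ip_unit_r[OF ftC[of k], of n] ftn[OF that] by (simp add: e_def)
  have ftft: "ft k \<bullet>c ft l = (if k = l then 1 else 0)" if kl: "k < n" "l < n" for k l
  proof -
    have "ft k \<bullet>c ft l = (\<Sum>i<n+1. ft k $ i * cnj (ft l $ i))" by (rule cscalar_eq[OF ftC])
    also have "\<dots> = (\<Sum>i<n. ft k $ i * cnj (ft l $ i))" using ftn[OF kl(1)] by simp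
    also have "\<dots> = (\<Sum>i<n. f k $ i * cnj (f l $ i))" by (rule sum.cong) (use kl fti in auto)
    also have "\<dots> = f k \<bullet>c f l" by (rule cscalar_eq[symmetric, OF fC[OF kl(2)]])
    finally show ?thesis using f_orthonormal kl by simp
  qed
  have xft: "x \<bullet>c ft l = mu l" if l: "l < n" for l
  proof -
    have "x \<bullet>c ft l = (\<Sum>i<n+1. x $ i * cnj (ft l $ i))" by (rule cscalar_eq[OF ftC])
    also have "\<dots> = (\<Sum>i<n+1. (\<Sum>k<n. mu k * (ft k $ i * cnj (ft l $ i))) + nu * (e $ i * cnj (ft l $ i)))"
      by (rule sum.cong) (use xdec in \<open>auto simp: sum_distrib_left sum_distrib_right distrib_left distrib_right mult_ac\<close>)
    also have "\<dots> = (\<Sum>i<n+1. \<Sum>k<n. mu k * (ft k $ i * cnj (ft l $ i))) + (\<Sum>i<n+1. nu * (e $ i * cnj (ft l $ i)))"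
      by (rule sum.distrib)
    finally have s0: "x \<bullet>c ft l = (\<Sum>i<n+1. \<Sum>k<n. mu k * (ft k $ i * cnj (ft l $ i))) + (\<Sum>i<n+1. nu * (e $ i * cnj (ft l $ i)))" .
    have s1: "(\<Sum>i<n+1. \<Sum>k<n. mu k * (ft k $ i * cnj (ft l $ i))) = (\<Sum>k<n. mu k * (ft k \<bullet>c ft l))"
      by (subst sum.swap) (simp add: sum_distrib_left cscalar_eq[OF ftC] distrib_left)
    have "(\<Sum>k<n. mu k * (ft k \<bullet>c ft l)) = (\<Sum>k<n. if k = l then mu l else 0)"
      by (rule sum.cong) (use ftft l in auto)
    hence s2: "(\<Sum>k<n. mu k * (ft k \<bullet>c ft l)) = mu l" using l by simp
    have s3: "(\<Sum>i<n+1. nu * (e $ i * cnj (ft l $ i))) = nu * (e \<bullet>c ft l)"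
      by (simp add: sum_distrib_left cscalar_eq[OF ftC] distrib_left)
    show ?thesis using s0 s1 s2 s3 ef[OF l] by simp
  qed
  have Tval: "T l = lam l * cnj (mu l) / (cnj nu - 1)" if l: "l < n" for l
  proof -
    have Uftv: "U *\<^sub>v ft l = lam l \<cdot>\<^sub>v ft l + T l \<cdot>\<^sub>v w"
      by (rule eq_vecI) (use Uft[OF l] UC dft dw in auto)
    have fx: "ft l \<bullet>c x = cnj (mu l)" using ip_conj[OF xC ftC[of l]] xft[OF l] by simp
    have "0 = ft l \<bullet>c e" using fe[OF l] by simp
    also have "\<dots> = (U *\<^sub>v ft l) \<bullet>c x" unfolding x_def by (rule unitary_ip[OF U ftC[of l] eC, symmetric])
    also have "\<dots> = (lam l \<cdot>\<^sub>v ft l + T l \<cdot>\<^sub>v w) \<bullet>c x" by (simp only: Uftv)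
    also have "\<dots> = lam l * (ft l \<bullet>c x) + T l * (w \<bullet>c x)"
      using ftC wC xC by (simp add: ip_add_l[of _ "n+1"] ip_smult_l[of _ "n+1"])
    also have "\<dots> = lam l * cnj (mu l) + T l * (1 - cnj nu)" by (simp only: fx wx)
    finally have eq: "0 = lam l * cnj (mu l) + T l * (1 - cnj nu)" .
    have "T l * (cnj nu - 1) = lam l * cnj (mu l)" using eq by (rule lin_aux)
    thus ?thesis using cnu by (simp add: eq_divide_eq)
  qed
  define \<Lambda> where "\<Lambda> k = (if k < n then lam k else 1)" for k
  define a where "a k = (if k < n then mu k else nu - 1)" for k
  define b where "b k = (if k < n then T k else 1)" for k
  define F where "F = mat (n+1) (n+1) (\<lambda>(i,j). if j < n then ft j $ i else e $ i)"
  have FC: "F \<in> carrier_mat (n+1) (n+1)" by (simp add: F_def)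
  have dF: "dim_row F = n+1" "dim_col F = n+1" by (simp_all add: F_def)
  have colF: "col F l = (if l < n then ft l else e)" if l: "l < n+1" for l
    by (rule eq_vecI) (use dft de l in \<open>auto simp: F_def\<close>)
  have FF: "adjoint_mat F * F = 1\<^sub>m (n+1)"
  proof (rule adj_cols[OF FC])
    fix i j assume i: "i < n+1" and j: "j < n+1"
    have "i < n \<or> i = n" "j < n \<or> j = n" using i j by auto
    thus "col F j \<bullet>c col F i = (if j = i then 1 else 0)"
      using colF[OF i] colF[OF j] ftft ef fe ee by auto
  qed
  have UF: "(U *\<^sub>v col F l) $ i = \<Lambda> l * F $$ (i,l) + b l * w $ i" if l: "l < n+1" and i: "i < n+1" for l i
  proof (cases "l < n")
    case True
    thus ?thesis using colF[OF l] Uft[OF True i] i l by (simp add: \<Lambda>_def b_def F_def)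
  next
    case False
    hence ln: "l = n" using l by simp
    have "(U *\<^sub>v col F l) $ i = x $ i" using colF[OF l] ln by (simp add: x_def)
    also have "\<dots> = e $ i + w $ i" using i de by (simp add: w_def)
    finally show ?thesis using ln i by (simp add: \<Lambda>_def b_def F_def)
  qed
  have wdec: "w $ i = (\<Sum>k<n+1. a k * F $$ (i,k))" if i: "i < n+1" for i
  proof -
    have "(\<Sum>k<n. a k * F $$ (i,k)) = (\<Sum>k<n. mu k * ft k $ i)"
      by (rule sum.cong) (use i in \<open>auto simp: a_def F_def\<close>)
    moreover have "(\<Sum>k<n+1. a k * F $$ (i,k)) = (\<Sum>k<n. a k * F $$ (i,k)) + a n * F $$ (i,n)" by simp
    moreover have "a n * F $$ (i,n) = (nu - 1) * e $ i" using i by (simp add: a_def F_def)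
    ultimately have "(\<Sum>k<n+1. a k * F $$ (i,k)) = (\<Sum>k<n. mu k * ft k $ i) + (nu - 1) * e $ i"
      by simp
    also have "\<dots> = w $ i" using xdec[OF i] i de by (simp add: w_def algebra_simps)
    finally show ?thesis by simp
  qed
  define F' where "F' = mat n n (\<lambda>(i,j). f j $ i)"
  have F'C: "F' \<in> carrier_mat n n" by (simp add: F'_def)
  have colF': "col F' l = f l" if l: "l < n" for l
    by (rule eq_vecI) (use df[OF l] l in \<open>auto simp: F'_def\<close>)
  have FF': "adjoint_mat F' * F' = 1\<^sub>m n"
  proof (rule adj_cols[OF F'C])
    fix i j assume i: "i < n" and j: "j < n"
    show "col F' j \<bullet>c col F' i = (if j = i then 1 else 0)"
      using colF'[OF i] colF'[OF j] f_orthonormal i j by simp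
  qed
  show ?thesis
  proof (intro conjI allI impI)
    show "nu \<noteq> 1" by (rule nu_ne)
    fix z assume z: "z \<notin> lam ` {..<n}"
    have zl: "z - lam l \<noteq> 0" if "l < n" for l using z that by auto
    define D where "D = mat n n (\<lambda>(k,l). if k = l then (\<lambda>k. z - lam k) k else 0)"
    have DC: "D \<in> carrier_mat n n" by (simp add: D_def)
    have eqD: "(z \<cdot>\<^sub>m 1\<^sub>m n - V0) * F' = F' * D"
    proof (rule mat_eq_cols[OF _ F'C DC])
      show "z \<cdot>\<^sub>m 1\<^sub>m n - V0 \<in> carrier_mat n n" by (rule minus_carrier_mat[OF V0C])
      fix i l assume i: "i < n" and l: "l < n"
      have "((z \<cdot>\<^sub>m 1\<^sub>m n - V0) *\<^sub>v col F' l) $ i = z * f l $ i - (V0 *\<^sub>v f l) $ i"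
        using zU_apply[OF V0C _ i, of "f l" z] colF'[OF l] fC[OF l] by simp
      also have "\<dots> = (z - lam l) * f l $ i" using f_eigen l i df[OF l] by (simp add: V0_def algebra_simps)
      also have "\<dots> = (\<Sum>k<n. if k = l then F' $$ (i,l) * (z - lam l) else 0)"
        using i l by (simp add: F'_def mult.commute)
      also have "\<dots> = (\<Sum>k<n. F' $$ (i,k) * D $$ (k,l))"
        by (rule sum.cong) (use i l in \<open>auto simp: D_def\<close>)
      finally show "((z \<cdot>\<^sub>m 1\<^sub>m n - V0) *\<^sub>v col F' l) $ i = (\<Sum>k<n. F' $$ (i,k) * D $$ (k,l))" .
    qed
    have "det (z \<cdot>\<^sub>m 1\<^sub>m n - V0) = det D"
      by (rule det_sim[OF _ DC F'C FF' eqD]) (rule minus_carrier_mat[OF V0C])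
    also have "det D = (\<Prod>i<n. z - lam i)" unfolding D_def by (rule det_diag)
    finally have P: "det (z \<cdot>\<^sub>m 1\<^sub>m n - V0) = (\<Prod>i<n. z - lam i)" .
    define M where "M = mat (n+1) (n+1) (\<lambda>(k,l). (if k = l then (\<lambda>k. z - \<Lambda> k) k else 0) - a k * b l)"
    have MC: "M \<in> carrier_mat (n+1) (n+1)" by (simp add: M_def)
    have eqM: "(z \<cdot>\<^sub>m 1\<^sub>m (n+1) - U) * F = F * M"
    proof (rule mat_eq_cols[OF _ FC MC])
      show "z \<cdot>\<^sub>m 1\<^sub>m (n+1) - U \<in> carrier_mat (n+1) (n+1)" by (rule minus_carrier_mat[OF UC])
      fix i l assume i: "i < n+1" and l: "l < n+1"
      have cFC: "col F l \<in> carrier_vec (n+1)" by (rule col_carrier_vec[OF l FC])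
      have "((z \<cdot>\<^sub>m 1\<^sub>m (n+1) - U) *\<^sub>v col F l) $ i = z * col F l $ i - (U *\<^sub>v col F l) $ i"
        by (rule zU_apply[OF UC cFC i])
      also have "\<dots> = (z - \<Lambda> l) * F $$ (i,l) - b l * w $ i"
        using UF[OF l i] i l dF by (simp add: algebra_simps)
      also have "\<dots> = (\<Sum>k<n+1. (if k = l then F $$ (i,l) * (z - \<Lambda> l) else 0) - b l * (a k * F $$ (i,k)))"
      proof -
        have "(\<Sum>k<n+1. (if k = l then F $$ (i,l) * (z - \<Lambda> l) else 0) - b l * (a k * F $$ (i,k)))
            = F $$ (i,l) * (z - \<Lambda> l) - b l * (\<Sum>k<n+1. a k * F $$ (i,k))"
        proof -
          have A1: "(\<Sum>k<n+1. (if k = l then F $$ (i,l) * (z - \<Lambda> l) else 0)) = F $$ (i,l) * (z - \<Lambda> l)"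
            using l by (simp del: sum.lessThan_Suc)
          have A2: "(\<Sum>k<n+1. b l * (a k * F $$ (i,k))) = b l * (\<Sum>k<n+1. a k * F $$ (i,k))"
            by (rule sum_distrib_left[symmetric])
          show ?thesis by (simp only: sum_subtractf A1 A2)
        qed
        thus ?thesis using wdec[OF i] by (simp add: mult.commute)
      qed
      also have "\<dots> = (\<Sum>k<n+1. F $$ (i,k) * M $$ (k,l))"
        by (rule sum.cong) (use i l in \<open>auto simp: M_def algebra_simps\<close>)
      finally show "((z \<cdot>\<^sub>m 1\<^sub>m (n+1) - U) *\<^sub>v col F l) $ i = (\<Sum>k<n+1. F $$ (i,k) * M $$ (k,l))" .
    qed
    have dM1: "det (z \<cdot>\<^sub>m 1\<^sub>m (n+1) - U) = det M"
      by (rule det_sim[OF _ MC FC FF eqM]) (rule minus_carrier_mat[OF UC])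
    have dM2: "det M = (\<Prod>i<n. z - \<Lambda> i) * ((z - \<Lambda> n) - a n - (z - \<Lambda> n) * (\<Sum>l<n. a l * b l / (z - \<Lambda> l)))"
      unfolding M_def by (rule det_rank1) (use zl in \<open>auto simp: \<Lambda>_def b_def\<close>)
    have pr1: "(\<Prod>i<n. z - \<Lambda> i) = (\<Prod>i<n. z - lam i)" by (rule prod.cong) (auto simp: \<Lambda>_def)
    have sm1: "(\<Sum>l<n. a l * b l / (z - \<Lambda> l)) =
       (\<Sum>k<n. (complex_of_real (cmod (mu k)))^2 * lam k / (z - lam k)) / (cnj nu - 1)"
      unfolding sum_divide_distrib
    proof (rule sum.cong[OF refl])
      fix k assume "k \<in> {..<n}"
      hence k: "k < n" by simp
      have sq: "(complex_of_real (cmod (mu k)))^2 = mu k * cnj (mu k)"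
        using complex_norm_square[of "mu k"] by simp
      have ak: "a k = mu k" and bk: "b k = T k" and Lk: "\<Lambda> k = lam k" using k by (simp_all add: a_def b_def \<Lambda>_def)
      have zk: "z - lam k \<noteq> 0" by (rule zl[OF k])
      show "a k * b k / (z - \<Lambda> k) = (complex_of_real (cmod (mu k)))^2 * lam k / (z - lam k) / (cnj nu - 1)"
        unfolding ak bk Lk Tval[OF k] sq using zk cnu by (simp add: field_simps)
    qed
    have L: "det (z \<cdot>\<^sub>m 1\<^sub>m (n+1) - U) = (\<Prod>i<n. z - lam i) *
        ((z - 1) - (nu - 1) - (z - 1) * ((\<Sum>k<n. (complex_of_real (cmod (mu k)))^2 * lam k / (z - lam k)) / (cnj nu - 1)))"
      by (simp only: dM1 dM2 pr1 sm1) (simp add: \<Lambda>_def a_def)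
    show "det (z \<cdot>\<^sub>m 1\<^sub>m (n+1) - u (n+1)) =
         det (z \<cdot>\<^sub>m 1\<^sub>m n - u n) / (cnj nu - 1) *
         ((z - nu) * (cnj nu - 1)
          - (z - 1) * (\<Sum>k<n. (complex_of_real (cmod (mu k)))^2 * lam k / (z - lam k)))"
      unfolding U_def[symmetric] V0_def[symmetric] L P using cnu by (simp add: field_simps)
  qed
qed

end
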